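(* Let $G$ be a compact, simply connected, semisimple Lie group, let $0<q<1$, and let $Y\subseteq\mathbf{P}^+$ be a finite generating set for $R(G_q)$. Then $\omega_Y(R(G_q))=\max_{\lambda\in Y}q^{-4\langle\lambda|\rho\rangle}$.
   Context: For $G$ with positive roots $\Phi^+$, dominant integral weights $\mathbf{P}^+$, Weyl vector $\rho$, longest Weyl group element $w_\circ$, and $W$-invariant inner product $\langle\cdot|\cdot\rangle$ normalised so that short roots have square length $2$: $R(G_q)$ is the fusion algebra of the $q$-deformation $G_q$, with irreducibles $\mathbf{P}^+$, unit $0$, structure constants equal to tensor product multiplicities of irreducible representations of $G$, involution $\bar\lambda=-w_\circ\lambda$, and quantum dimension $d(\lambda)=\prod_{\alpha\in\Phi^+}\frac{[\langle\lambda+\rho|\alpha\rangle]_q}{[\langle\rho|\alpha\rangle]_q}$ with $[x]_q=\frac{q^{-x}-q^x}{q^{-1}-q}$. A finite generating set is a finite $Y\subseteq\mathbf{P}^+$ with $\bar Y=Y$ such that every $\lambda\in\mathbf{P}^+$ occurs in some tensor product $\lambda_1\otimes\cdots\otimes\lambda_n$, $\lambda_i\in Y$; $\ell_Y(\lambda)$ is the least such $n$ ($\ell_Y(0)=0$); $B_Y(n)=\{\lambda:\ell_Y(\lambda)\le n\}$, $|B_Y(n)|=\sum_{\lambda\in B_Y(n)}d(\lambda)^2$, and $\omega_Y(R(G_q))=\lim_{n}|B_Y(n)|^{1/n}$. *)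

theory Defs
  imports "HOL-Analysis.Analysis"
begin

text \<open>Combinatorial model of a compact simply connected semisimple Lie group G:
  its (reduced, crystallographic) root system \<Phi> spanning a Euclidean space,
  with positive system determined by a regular vector t.\<close>

definition refl_vec :: "'a::euclidean_space \<Rightarrow> 'a \<Rightarrow> 'a" where
  "refl_vec \<alpha> v = v - (2 * (v \<bullet> \<alpha>) / (\<alpha> \<bullet> \<alpha>)) *\<^sub>R \<alpha>"

definition root_system :: "'a::euclidean_space set \<Rightarrow> bool" where
  "root_system \<Phi> \<longleftrightarrow> finite \<Phi> \<and> 0 \<notin> \<Phi> \<and> span \<Phi> = UNIV \<and>
     (\<forall>\<alpha>\<in>\<Phi>. \<forall>\<beta>\<in>\<Phi>. refl_vec \<alpha> \<beta> \<in> \<Phi>) \<and>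
     (\<forall>\<alpha>\<in>\<Phi>. \<forall>\<beta>\<in>\<Phi>. 2 * (\<beta> \<bullet> \<alpha>) / (\<alpha> \<bullet> \<alpha>) \<in> \<int>) \<and>
     (\<forall>\<alpha>\<in>\<Phi>. \<forall>c::real. c *\<^sub>R \<alpha> \<in> \<Phi> \<longrightarrow> c = 1 \<or> c = -1)"

text \<open>Two roots lie in the same simple factor iff they are linked by a chain of
  non-orthogonal roots.\<close>
definition root_linked :: "'a::euclidean_space set \<Rightarrow> 'a \<Rightarrow> 'a \<Rightarrow> bool" where
  "root_linked \<Phi> = (\<lambda>x y. x \<in> \<Phi> \<and> y \<in> \<Phi> \<and> x \<bullet> y \<noteq> 0)\<^sup>*\<^sup>*"

text \<open>Normalisation: short roots (of each simple factor) have square length 2.\<close>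
definition short_normalised :: "'a::euclidean_space set \<Rightarrow> bool" where
  "short_normalised \<Phi> \<longleftrightarrow>
     (\<forall>\<alpha>\<in>\<Phi>. (\<forall>\<beta>\<in>\<Phi>. root_linked \<Phi> \<alpha> \<beta> \<longrightarrow> \<alpha> \<bullet> \<alpha> \<le> \<beta> \<bullet> \<beta>) \<longrightarrow> \<alpha> \<bullet> \<alpha> = 2)"

definition regular :: "'a::euclidean_space set \<Rightarrow> 'a \<Rightarrow> bool" where
  "regular \<Phi> t \<longleftrightarrow> (\<forall>\<alpha>\<in>\<Phi>. \<alpha> \<bullet> t \<noteq> 0)"

definition pos_roots :: "'a::euclidean_space set \<Rightarrow> 'a \<Rightarrow> 'a set" where
  "pos_roots \<Phi> t = {\<alpha> \<in> \<Phi>. \<alpha> \<bullet> t > 0}"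

definition weyl_vec :: "'a::euclidean_space set \<Rightarrow> 'a \<Rightarrow> 'a" where
  "weyl_vec \<Phi> t = (1/2) *\<^sub>R (\<Sum>\<alpha>\<in>pos_roots \<Phi> t. \<alpha>)"

definition weights :: "'a::euclidean_space set \<Rightarrow> 'a set" where
  "weights \<Phi> = {l. \<forall>\<alpha>\<in>\<Phi>. 2 * (l \<bullet> \<alpha>) / (\<alpha> \<bullet> \<alpha>) \<in> \<int>}"

definition dominant :: "'a::euclidean_space set \<Rightarrow> 'a \<Rightarrow> 'a set" where
  "dominant \<Phi> t = {l \<in> weights \<Phi>. \<forall>\<alpha>\<in>pos_roots \<Phi> t. l \<bullet> \<alpha> \<ge> 0}"

inductive_set weyl_group :: "'a::euclidean_space set \<Rightarrow> ('a \<Rightarrow> 'a) set" for \<Phi> where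
  weyl_id: "id \<in> weyl_group \<Phi>"
| weyl_step: "w \<in> weyl_group \<Phi> \<Longrightarrow> \<alpha> \<in> \<Phi> \<Longrightarrow> refl_vec \<alpha> \<circ> w \<in> weyl_group \<Phi>"

text \<open>Sign of a Weyl group element: (-1)^(length), length = number of positive
  roots sent to negative roots.\<close>
definition weyl_sign :: "'a::euclidean_space set \<Rightarrow> 'a \<Rightarrow> ('a \<Rightarrow> 'a) \<Rightarrow> int" where
  "weyl_sign \<Phi> t w = (-1) ^ card {\<alpha> \<in> pos_roots \<Phi> t. w \<alpha> \<notin> pos_roots \<Phi> t}"

definition longest :: "'a::euclidean_space set \<Rightarrow> 'a \<Rightarrow> 'a \<Rightarrow> 'a" where
  "longest \<Phi> t = (THE w. w \<in> weyl_group \<Phi> \<and> w ` pos_roots \<Phi> t = uminus ` pos_roots \<Phi> t)"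

text \<open>Involution of the fusion algebra: \<open>\<bar>\<lambda> = -w\<^sub>0 \<lambda>\<close>.\<close>
definition dual_wt :: "'a::euclidean_space set \<Rightarrow> 'a \<Rightarrow> 'a \<Rightarrow> 'a" where
  "dual_wt \<Phi> t l = - longest \<Phi> t l"

definition kpf :: "'a::euclidean_space set \<Rightarrow> 'a \<Rightarrow> 'a \<Rightarrow> nat" where
  "kpf \<Phi> t \<beta> = card {c :: 'a \<Rightarrow> nat. (\<forall>\<alpha>. \<alpha> \<notin> pos_roots \<Phi> t \<longrightarrow> c \<alpha> = 0) \<and>
                        (\<Sum>\<alpha>\<in>pos_roots \<Phi> t. real (c \<alpha>) *\<^sub>R \<alpha>) = \<beta>}"

text \<open>Multiplicity of the irreducible \<open>\<nu>\<close> in \<open>\<lambda> \<otimes> \<mu>\<close> (Steinberg's formula).\<close>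
definition tensor_mult :: "'a::euclidean_space set \<Rightarrow> 'a \<Rightarrow> 'a \<Rightarrow> 'a \<Rightarrow> 'a \<Rightarrow> int" where
  "tensor_mult \<Phi> t l m n =
     (\<Sum>w\<in>weyl_group \<Phi>. \<Sum>w'\<in>weyl_group \<Phi>.
        weyl_sign \<Phi> t w * weyl_sign \<Phi> t w' *
        int (kpf \<Phi> t (w (l + weyl_vec \<Phi> t) + w' (m + weyl_vec \<Phi> t)
                       - (n + 2 *\<^sub>R weyl_vec \<Phi> t))))"

text \<open>Irreducibles occurring in some n-fold tensor product of elements of Y.\<close>
fun products :: "'a::euclidean_space set \<Rightarrow> 'a \<Rightarrow> 'a set \<Rightarrow> nat \<Rightarrow> 'a set" where
  "products \<Phi> t Y 0 = {0}"
| "products \<Phi> t Y (Suc n) = {v \<in> dominant \<Phi> t. \<exists>m\<in>products \<Phi> t Y n. \<exists>y\<in>Y. tensor_mult \<Phi> t m y v > 0}"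

definition generating_set :: "'a::euclidean_space set \<Rightarrow> 'a \<Rightarrow> 'a set \<Rightarrow> bool" where
  "generating_set \<Phi> t Y \<longleftrightarrow> finite Y \<and> Y \<subseteq> dominant \<Phi> t \<and> dual_wt \<Phi> t ` Y = Y \<and>
     (\<forall>l\<in>dominant \<Phi> t. \<exists>n. l \<in> products \<Phi> t Y n)"

definition word_length :: "'a::euclidean_space set \<Rightarrow> 'a \<Rightarrow> 'a set \<Rightarrow> 'a \<Rightarrow> nat" where
  "word_length \<Phi> t Y l = (LEAST n. l \<in> products \<Phi> t Y n)"

definition ball_set :: "'a::euclidean_space set \<Rightarrow> 'a \<Rightarrow> 'a set \<Rightarrow> nat \<Rightarrow> 'a set" where
  "ball_set \<Phi> t Y n = {l \<in> dominant \<Phi> t. (\<exists>k. l \<in> products \<Phi> t Y k) \<and> word_length \<Phi> t Y l \<le> n}"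

definition qint :: "real \<Rightarrow> real \<Rightarrow> real" where
  "qint q x = (q powr (-x) - q powr x) / (q powr (-1) - q)"

definition qdim :: "'a::euclidean_space set \<Rightarrow> 'a \<Rightarrow> real \<Rightarrow> 'a \<Rightarrow> real" where
  "qdim \<Phi> t q l = (\<Prod>\<alpha>\<in>pos_roots \<Phi> t.
      qint q ((l + weyl_vec \<Phi> t) \<bullet> \<alpha>) / qint q (weyl_vec \<Phi> t \<bullet> \<alpha>))"

definition ball_size :: "'a::euclidean_space set \<Rightarrow> 'a \<Rightarrow> real \<Rightarrow> 'a set \<Rightarrow> nat \<Rightarrow> real" where
  "ball_size \<Phi> t q Y n = (\<Sum>l\<in>ball_set \<Phi> t Y n. (qdim \<Phi> t q l)\<^sup>2)"

end

theory Submission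
  imports Defs
begin



locale RS =
  fixes \<Phi> :: "'a::euclidean_space set" and t :: 'a
  assumes rs: "root_system \<Phi>" and reg: "regular \<Phi> t"
begin

abbreviation "P \<equiv> pos_roots \<Phi> t"
definition "S = (\<Sum>\<beta>\<in>P. \<beta>)"

lemma fin: "finite \<Phi>" and zn: "0 \<notin> \<Phi>" and spn: "span \<Phi> = UNIV"
  and refl_in: "\<alpha> \<in> \<Phi> \<Longrightarrow> \<beta> \<in> \<Phi> \<Longrightarrow> refl_vec \<alpha> \<beta> \<in> \<Phi>"
  using rs unfolding root_system_def by auto

lemma neg_in: "\<beta> \<in> \<Phi> \<Longrightarrow> - \<beta> \<in> \<Phi>"
proof -
  assume b: "\<beta> \<in> \<Phi>"
  then have "\<beta> \<bullet> \<beta> \<noteq> 0" using zn by auto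
  then have "refl_vec \<beta> \<beta> = - \<beta>" by (simp add: refl_vec_def algebra_simps scaleR_2)
  with refl_in[OF b b] show ?thesis by simp
qed

lemma P_sub: "P \<subseteq> \<Phi>" and finP: "finite P"
  using fin by (auto simp: pos_roots_def)

lemma notP: "\<beta> \<in> \<Phi> \<Longrightarrow> \<beta> \<notin> P \<Longrightarrow> \<beta> \<bullet> t < 0"
  using reg unfolding regular_def pos_roots_def
  by (metis (mono_tags, lifting) linorder_neqE_linordered_idom mem_Collect_eq)

lemma negP: "\<beta> \<in> \<Phi> \<Longrightarrow> \<beta> \<notin> P \<Longrightarrow> - \<beta> \<in> P"
  using notP neg_in by (auto simp: pos_roots_def)

lemma refl_linear: "linear (refl_vec \<alpha>)"
proof (rule linearI)
  fix x y show "refl_vec \<alpha> (x + y) = refl_vec \<alpha> x + refl_vec \<alpha> y"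
    by (simp add: refl_vec_def inner_add_left add_divide_distrib scaleR_add_left)
next
  fix c x show "refl_vec \<alpha> (c *\<^sub>R x) = c *\<^sub>R refl_vec \<alpha> x"
    by (simp add: refl_vec_def scaleR_diff_right)
qed

lemma refl_inner: "\<alpha> \<noteq> 0 \<Longrightarrow> refl_vec \<alpha> x \<bullet> refl_vec \<alpha> y = x \<bullet> y"
proof -
  assume "\<alpha> \<noteq> 0"
  then have a: "\<alpha> \<bullet> \<alpha> \<noteq> 0" by simp
  show ?thesis unfolding refl_vec_def
    using a by (simp add: inner_diff_left inner_diff_right inner_commute)
qed

lemma W_props: "w \<in> weyl_group \<Phi> \<Longrightarrow> linear w \<and> (\<forall>x y. w x \<bullet> w y = x \<bullet> y) \<and> (\<forall>\<beta>\<in>\<Phi>. w \<beta> \<in> \<Phi>)"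
proof (induction rule: weyl_group.induct)
  case weyl_id
  then show ?case using linear_id by (simp add: id_def)
next
  case (weyl_step w \<alpha>)
  have "\<alpha> \<noteq> 0" using weyl_step zn by auto
  have "linear (refl_vec \<alpha> \<circ> w)" using weyl_step linear_compose[OF _ refl_linear] by blast
  moreover have "\<forall>x y. (refl_vec \<alpha> \<circ> w) x \<bullet> (refl_vec \<alpha> \<circ> w) y = x \<bullet> y"
    using weyl_step refl_inner[OF \<open>\<alpha> \<noteq> 0\<close>] by simp
  moreover have "\<forall>\<beta>\<in>\<Phi>. (refl_vec \<alpha> \<circ> w) \<beta> \<in> \<Phi>" using weyl_step refl_in by simp
  ultimately show ?case by blast
qed

lemma W_lin: "w \<in> weyl_group \<Phi> \<Longrightarrow> linear w" using W_props by blast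
lemma W_inner: "w \<in> weyl_group \<Phi> \<Longrightarrow> w x \<bullet> w y = x \<bullet> y" using W_props by blast
lemma W_Phi: "w \<in> weyl_group \<Phi> \<Longrightarrow> \<beta> \<in> \<Phi> \<Longrightarrow> w \<beta> \<in> \<Phi>" using W_props by blast

lemma W_inj: assumes "w \<in> weyl_group \<Phi>" "w x = w y" shows "x = y"
proof -
  have "w (x - y) = 0" using W_lin[OF assms(1)] assms(2) by (simp add: linear_diff)
  then have "(x - y) \<bullet> (x - y) = 0" using W_inner[OF assms(1), of "x - y" "x - y"] by simp
  then show ?thesis by simp
qed

lemma finite_W: "finite (weyl_group \<Phi>)"
proof -
  let ?r = "\<lambda>w. restrict w \<Phi>"
  have "inj_on ?r (weyl_group \<Phi>)"
  proof (rule inj_onI)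
    fix v w assume v: "v \<in> weyl_group \<Phi>" and w: "w \<in> weyl_group \<Phi>" and e: "?r v = ?r w"
    have "\<And>b. b \<in> \<Phi> \<Longrightarrow> v b = w b" using e by (metis restrict_apply')
    then have "\<And>x. x \<in> span \<Phi> \<Longrightarrow> v x = w x"
      using linear_eq_on_span[OF W_lin[OF v] W_lin[OF w]] by blast
    then show "v = w" using spn by auto
  qed
  moreover have "?r ` weyl_group \<Phi> \<subseteq> \<Phi> \<rightarrow>\<^sub>E \<Phi>" using W_Phi by auto
  moreover have "finite (\<Phi> \<rightarrow>\<^sub>E \<Phi>)" using fin by (simp add: finite_PiE)
  ultimately show ?thesis by (rule inj_on_finite)
qed

end

context RS begin

definition eps :: "('a \<Rightarrow> 'a) \<Rightarrow> 'a \<Rightarrow> real" where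
  "eps w \<beta> = (if w \<beta> \<in> P then 1 else -1)"

lemma posP: "\<beta> \<in> P \<Longrightarrow> \<beta> \<bullet> t > 0" by (simp add: pos_roots_def)

lemma eps_map: assumes "w \<in> weyl_group \<Phi>" "\<beta> \<in> P" shows "eps w \<beta> *\<^sub>R w \<beta> \<in> P"
proof -
  have "w \<beta> \<in> \<Phi>" using W_Phi[OF assms(1)] assms(2) P_sub by auto
  then show ?thesis using negP[of "w \<beta>"] by (auto simp: eps_def)
qed

lemma K: assumes w: "w \<in> weyl_group \<Phi>" shows "(\<Sum>\<beta>\<in>P. eps w \<beta> *\<^sub>R w \<beta>) = S"
proof -
  let ?g = "\<lambda>\<beta>. eps w \<beta> *\<^sub>R w \<beta>"
  have inj: "inj_on ?g P"
  proof (rule inj_onI)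
    fix a b assume a: "a \<in> P" and b: "b \<in> P" and e: "?g a = ?g b"
    have "w (eps w a *\<^sub>R a) = w (eps w b *\<^sub>R b)"
      using e W_lin[OF w] by (simp add: linear_cmul)
    then have e2: "eps w a *\<^sub>R a = eps w b *\<^sub>R b" by (rule W_inj[OF w])
    show "a = b"
    proof (cases "eps w a = eps w b")
      case True
      then show ?thesis using e2 by (auto simp: eps_def split: if_splits)
    next
      case False
      then have "a = - b" using e2 by (auto simp: eps_def split: if_splits)
      then show ?thesis using posP[OF a] posP[OF b] by simp
    qed
  qed
  have "?g ` P \<subseteq> P" using eps_map[OF w] by auto
  then have img: "?g ` P = P" using endo_inj_surj[OF finP _ inj] by blast
  have "S = (\<Sum>\<beta>\<in>?g ` P. \<beta>)" using img by (simp add: S_def)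
  also have "\<dots> = (\<Sum>\<beta>\<in>P. ?g \<beta>)" using sum.reindex[OF inj] by simp
  finally show ?thesis by simp
qed

lemma pair: assumes w: "w \<in> weyl_group \<Phi>" shows "w x \<bullet> S = (\<Sum>\<beta>\<in>P. eps w \<beta> * (x \<bullet> \<beta>))"
proof -
  have "w x \<bullet> S = w x \<bullet> (\<Sum>\<beta>\<in>P. eps w \<beta> *\<^sub>R w \<beta>)" using K[OF w] by simp
  also have "\<dots> = (\<Sum>\<beta>\<in>P. eps w \<beta> * (x \<bullet> \<beta>))"
    by (simp add: inner_sum_right W_inner[OF w])
  finally show ?thesis .
qed

lemma xS: "x \<bullet> S = (\<Sum>\<beta>\<in>P. x \<bullet> \<beta>)" by (simp add: S_def inner_sum_right)

lemma B1: assumes w: "w \<in> weyl_group \<Phi>" and x: "\<forall>\<beta>\<in>P. 0 \<le> x \<bullet> \<beta>"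
  shows "w x \<bullet> S \<le> x \<bullet> S"
  unfolding pair[OF w] xS[of x]
  by (rule sum_mono) (use x in \<open>auto simp: eps_def\<close>)

lemma B2: assumes w: "w \<in> weyl_group \<Phi>" and x: "\<forall>\<beta>\<in>P. 0 < x \<bullet> \<beta>"
  and le: "x \<bullet> S \<le> w x \<bullet> S" and b: "\<beta> \<in> P" shows "w \<beta> \<in> P"
proof (rule ccontr)
  assume nb: "w \<beta> \<notin> P"
  have "(\<Sum>\<beta>\<in>P. eps w \<beta> * (x \<bullet> \<beta>)) < (\<Sum>\<beta>\<in>P. x \<bullet> \<beta>)"
  proof (rule sum_strict_mono_ex1[OF finP])
    show "\<forall>\<beta>\<in>P. eps w \<beta> * (x \<bullet> \<beta>) \<le> x \<bullet> \<beta>" using x by (auto simp: eps_def less_imp_le)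
    show "\<exists>a\<in>P. eps w a * (x \<bullet> a) < x \<bullet> a" using b nb x by (auto simp: eps_def intro!: bexI[of _ \<beta>])
  qed
  then show False using le unfolding pair[OF w] xS[of x] by simp
qed

lemma sign1: assumes "\<forall>\<beta>\<in>P. w \<beta> \<in> P" shows "weyl_sign \<Phi> t w = 1"
proof -
  have e: "{\<alpha> \<in> P. w \<alpha> \<notin> P} = {}" using assms by auto
  show ?thesis unfolding weyl_sign_def e by simp
qed

lemma refl_W: "\<alpha> \<in> \<Phi> \<Longrightarrow> refl_vec \<alpha> \<in> weyl_group \<Phi>"
  using weyl_group.weyl_step[OF weyl_group.weyl_id] by fastforce

lemma rho_pos: assumes a: "\<alpha> \<in> P" shows "0 < \<alpha> \<bullet> S"
proof -
  let ?s = "refl_vec \<alpha>"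
  have aP: "\<alpha> \<in> \<Phi>" using a P_sub by auto
  have sW: "?s \<in> weyl_group \<Phi>" by (rule refl_W[OF aP])
  have at: "0 < t \<bullet> \<alpha>" using posP[OF a] by (simp add: inner_commute)
  have aa: "0 < \<alpha> \<bullet> \<alpha>" using aP zn by (metis inner_gt_zero_iff)
  have sa: "?s \<alpha> = - \<alpha>" using aa by (simp add: refl_vec_def scaleR_2 algebra_simps)
  have esa: "eps ?s \<alpha> = -1" using sa posP[OF a] by (auto simp: eps_def pos_roots_def)
  have "(t - ?s t) \<bullet> S = t \<bullet> S - ?s t \<bullet> S" by (simp add: inner_diff_left)
  also have "\<dots> = (\<Sum>\<beta>\<in>P. t \<bullet> \<beta>) - (\<Sum>\<beta>\<in>P. eps ?s \<beta> * (t \<bullet> \<beta>))"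
    by (simp only: pair[OF sW, of t] xS[of t])
  also have "\<dots> = (\<Sum>\<beta>\<in>P. (1 - eps ?s \<beta>) * (t \<bullet> \<beta>))"
    by (simp add: sum_subtractf left_diff_distrib)
  also have "\<dots> \<ge> (1 - eps ?s \<alpha>) * (t \<bullet> \<alpha>)"
    by (rule member_le_sum[OF a _ finP])
       (auto simp: eps_def inner_commute intro!: mult_nonneg_nonneg less_imp_le[OF posP])
  finally have "0 < (t - ?s t) \<bullet> S" using esa at by simp
  moreover have "t - ?s t = (2 * (t \<bullet> \<alpha>) / (\<alpha> \<bullet> \<alpha>)) *\<^sub>R \<alpha>" by (simp add: refl_vec_def)
  ultimately have m: "0 < (2 * (t \<bullet> \<alpha>) / (\<alpha> \<bullet> \<alpha>)) * (\<alpha> \<bullet> S)" by (simp only: inner_scaleR_left)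
  moreover have c: "0 < 2 * (t \<bullet> \<alpha>) / (\<alpha> \<bullet> \<alpha>)" using at aa by simp
  show ?thesis by (rule zero_less_mult_pos[OF m c])
qed

end

context RS begin

lemma comb_zero: assumes "(\<Sum>\<alpha>\<in>P. real (c \<alpha>) *\<^sub>R \<alpha>) \<bullet> S \<le> 0" and "\<alpha> \<in> P" shows "c \<alpha> = 0"
proof -
  have eq: "(\<Sum>\<alpha>\<in>P. real (c \<alpha>) *\<^sub>R \<alpha>) \<bullet> S = (\<Sum>\<alpha>\<in>P. real (c \<alpha>) * (\<alpha> \<bullet> S))"
    by (simp add: inner_sum_left)
  have nn: "\<forall>\<alpha>\<in>P. 0 \<le> real (c \<alpha>) * (\<alpha> \<bullet> S)" using rho_pos by (simp add: less_imp_le)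
  have "0 \<le> (\<Sum>\<alpha>\<in>P. real (c \<alpha>) * (\<alpha> \<bullet> S))" using nn by (intro sum_nonneg) auto
  then have "(\<Sum>\<alpha>\<in>P. real (c \<alpha>) * (\<alpha> \<bullet> S)) = 0" using assms(1) eq by linarith
  then have "\<forall>\<alpha>\<in>P. real (c \<alpha>) * (\<alpha> \<bullet> S) = 0"
    by (subst (asm) sum_nonneg_eq_0_iff[OF finP]) (use nn in auto)
  then show ?thesis using assms(2) rho_pos[OF assms(2)] by auto
qed

lemma comb_nonneg: "0 \<le> (\<Sum>\<alpha>\<in>P. real (c \<alpha>) *\<^sub>R \<alpha>) \<bullet> S"
  by (simp add: inner_sum_left sum_nonneg less_imp_le[OF rho_pos])

lemma kpf_pos: assumes "kpf \<Phi> t v \<noteq> 0" shows "0 \<le> v \<bullet> S" "v \<bullet> S \<le> 0 \<Longrightarrow> v = 0"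
proof -
  from assms obtain c where c: "\<forall>\<alpha>. \<alpha> \<notin> P \<longrightarrow> c \<alpha> = 0" "(\<Sum>\<alpha>\<in>P. real (c \<alpha>) *\<^sub>R \<alpha>) = v"
    unfolding kpf_def by (metis (mono_tags, lifting) card.empty empty_Collect_eq)
  show "0 \<le> v \<bullet> S" using comb_nonneg c(2) by metis
  assume "v \<bullet> S \<le> 0"
  then have "\<forall>\<alpha>\<in>P. c \<alpha> = 0" using comb_zero c(2) by metis
  then show "v = 0" using c(2) by simp
qed

lemma kpf0: "kpf \<Phi> t 0 = 1"
proof -
  have "{c :: 'a \<Rightarrow> nat. (\<forall>\<alpha>. \<alpha> \<notin> P \<longrightarrow> c \<alpha> = 0) \<and> (\<Sum>\<alpha>\<in>P. real (c \<alpha>) *\<^sub>R \<alpha>) = 0} = {\<lambda>_. 0}"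
  proof (intro equalityI subsetI)
    fix c assume "c \<in> {c :: 'a \<Rightarrow> nat. (\<forall>\<alpha>. \<alpha> \<notin> P \<longrightarrow> c \<alpha> = 0) \<and> (\<Sum>\<alpha>\<in>P. real (c \<alpha>) *\<^sub>R \<alpha>) = 0}"
    then have c: "\<forall>\<alpha>. \<alpha> \<notin> P \<longrightarrow> c \<alpha> = 0" "(\<Sum>\<alpha>\<in>P. real (c \<alpha>) *\<^sub>R \<alpha>) = 0" by auto
    have "\<forall>\<alpha>\<in>P. c \<alpha> = 0" using comb_zero[of c] c(2) by simp
    with c(1) have "c = (\<lambda>_. 0)" by auto
    then show "c \<in> {\<lambda>_. 0}" by simp
  qed auto
  then show ?thesis unfolding kpf_def by simp
qed

lemma rho_eq: "weyl_vec \<Phi> t = (1/2) *\<^sub>R S" by (simp add: weyl_vec_def S_def)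

lemma dom_nonneg: "l \<in> dominant \<Phi> t \<Longrightarrow> \<beta> \<in> P \<Longrightarrow> 0 \<le> l \<bullet> \<beta>"
  by (simp add: dominant_def)

lemma dom_rho_pos: "l \<in> dominant \<Phi> t \<Longrightarrow> \<beta> \<in> P \<Longrightarrow> 0 < (l + weyl_vec \<Phi> t) \<bullet> \<beta>"
proof -
  assume a: "l \<in> dominant \<Phi> t" "\<beta> \<in> P"
  have "(l + weyl_vec \<Phi> t) \<bullet> \<beta> = l \<bullet> \<beta> + (1/2) * (\<beta> \<bullet> S)"
    by (simp add: rho_eq inner_add_left inner_commute inner_add_right)
  then show ?thesis using dom_nonneg[OF a] rho_pos[OF a(2)] by simp
qed

lemma dom_S: "l \<in> dominant \<Phi> t \<Longrightarrow> 0 \<le> l \<bullet> S"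
  by (simp add: xS sum_nonneg dom_nonneg)

lemma zero_dom: "0 \<in> dominant \<Phi> t" by (simp add: dominant_def weights_def)

lemma dom_add: "a \<in> dominant \<Phi> t \<Longrightarrow> b \<in> dominant \<Phi> t \<Longrightarrow> a + b \<in> dominant \<Phi> t"
  by (auto simp: dominant_def weights_def inner_add_left add_divide_distrib distrib_left intro: Ints_add)

lemma tm_nonzero: assumes "tensor_mult \<Phi> t l m v \<noteq> 0"
  obtains w w' where "w \<in> weyl_group \<Phi>" "w' \<in> weyl_group \<Phi>"
    "kpf \<Phi> t (w (l + weyl_vec \<Phi> t) + w' (m + weyl_vec \<Phi> t) - (v + 2 *\<^sub>R weyl_vec \<Phi> t)) \<noteq> 0"
proof -
  from assms obtain w where w: "w \<in> weyl_group \<Phi>" and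
    "(\<Sum>w'\<in>weyl_group \<Phi>. weyl_sign \<Phi> t w * weyl_sign \<Phi> t w' *
        int (kpf \<Phi> t (w (l + weyl_vec \<Phi> t) + w' (m + weyl_vec \<Phi> t)
                       - (v + 2 *\<^sub>R weyl_vec \<Phi> t)))) \<noteq> 0"
    unfolding tensor_mult_def by (meson sum.not_neutral_contains_not_neutral)
  then obtain w' where w': "w' \<in> weyl_group \<Phi>" and
    "weyl_sign \<Phi> t w * weyl_sign \<Phi> t w' *
        int (kpf \<Phi> t (w (l + weyl_vec \<Phi> t) + w' (m + weyl_vec \<Phi> t)
                       - (v + 2 *\<^sub>R weyl_vec \<Phi> t))) \<noteq> 0"
    by (meson sum.not_neutral_contains_not_neutral)
  then show ?thesis using that[OF w w'] by auto
qed

lemma arg_S: "(a + b - (v + 2 *\<^sub>R weyl_vec \<Phi> t)) \<bullet> S = a \<bullet> S + b \<bullet> S - v \<bullet> S - weyl_vec \<Phi> t \<bullet> S - weyl_vec \<Phi> t \<bullet> S"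
  by (simp add: inner_add_left inner_diff_left scaleR_2)

lemma tm_bound: assumes l: "l \<in> dominant \<Phi> t" and m: "m \<in> dominant \<Phi> t"
  and pos: "tensor_mult \<Phi> t l m v > 0" shows "v \<bullet> S \<le> l \<bullet> S + m \<bullet> S"
proof -
  obtain w w' where w: "w \<in> weyl_group \<Phi>" and w': "w' \<in> weyl_group \<Phi>" and
    k: "kpf \<Phi> t (w (l + weyl_vec \<Phi> t) + w' (m + weyl_vec \<Phi> t) - (v + 2 *\<^sub>R weyl_vec \<Phi> t)) \<noteq> 0"
    using tm_nonzero pos by (metis less_irrefl)
  have 1: "w (l + weyl_vec \<Phi> t) \<bullet> S \<le> (l + weyl_vec \<Phi> t) \<bullet> S"
    using B1[OF w] dom_rho_pos[OF l] by (simp add: less_imp_le)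
  have 2: "w' (m + weyl_vec \<Phi> t) \<bullet> S \<le> (m + weyl_vec \<Phi> t) \<bullet> S"
    using B1[OF w'] dom_rho_pos[OF m] by (simp add: less_imp_le)
  have 3: "0 \<le> (w (l + weyl_vec \<Phi> t) + w' (m + weyl_vec \<Phi> t) - (v + 2 *\<^sub>R weyl_vec \<Phi> t)) \<bullet> S"
    by (rule kpf_pos(1)[OF k])
  show ?thesis using 1 2 3 unfolding arg_S by (simp add: inner_add_left)
qed

lemma sign_id: "weyl_sign \<Phi> t id = 1" by (rule sign1) simp

lemma tm_pos: assumes l: "l \<in> dominant \<Phi> t" and m: "m \<in> dominant \<Phi> t"
  shows "tensor_mult \<Phi> t l m (l + m) \<ge> 1"
proof -
  define f where "f = (\<lambda>w w'. weyl_sign \<Phi> t w * weyl_sign \<Phi> t w' *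
        int (kpf \<Phi> t (w (l + weyl_vec \<Phi> t) + w' (m + weyl_vec \<Phi> t)
                       - ((l + m) + 2 *\<^sub>R weyl_vec \<Phi> t))))"
  have nn: "0 \<le> f w w'" if w: "w \<in> weyl_group \<Phi>" and w': "w' \<in> weyl_group \<Phi>" for w w'
  proof (cases "kpf \<Phi> t (w (l + weyl_vec \<Phi> t) + w' (m + weyl_vec \<Phi> t)
                       - ((l + m) + 2 *\<^sub>R weyl_vec \<Phi> t)) = 0")
    case True then show ?thesis by (simp add: f_def)
  next
    case False
    have 1: "w (l + weyl_vec \<Phi> t) \<bullet> S \<le> (l + weyl_vec \<Phi> t) \<bullet> S"
      using B1[OF w] dom_rho_pos[OF l] by (simp add: less_imp_le)
    have 2: "w' (m + weyl_vec \<Phi> t) \<bullet> S \<le> (m + weyl_vec \<Phi> t) \<bullet> S"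
      using B1[OF w'] dom_rho_pos[OF m] by (simp add: less_imp_le)
    have 3: "0 \<le> (w (l + weyl_vec \<Phi> t) + w' (m + weyl_vec \<Phi> t) - ((l + m) + 2 *\<^sub>R weyl_vec \<Phi> t)) \<bullet> S"
      by (rule kpf_pos(1)[OF False])
    have 4: "(l + weyl_vec \<Phi> t) \<bullet> S \<le> w (l + weyl_vec \<Phi> t) \<bullet> S"
      "(m + weyl_vec \<Phi> t) \<bullet> S \<le> w' (m + weyl_vec \<Phi> t) \<bullet> S"
      using 1 2 3 unfolding arg_S by (auto simp: inner_add_left)
    have "weyl_sign \<Phi> t w = 1"
      using sign1 B2[OF w _ 4(1)] dom_rho_pos[OF l] by blast
    moreover have "weyl_sign \<Phi> t w' = 1"
      using sign1 B2[OF w' _ 4(2)] dom_rho_pos[OF m] by blast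
    ultimately show ?thesis by (simp add: f_def)
  qed
  have fid: "f id id = 1" by (simp add: f_def sign_id scaleR_2 kpf0 algebra_simps)
  have idW: "id \<in> weyl_group \<Phi>" by (rule weyl_group.weyl_id)
  have "f id id \<le> (\<Sum>w'\<in>weyl_group \<Phi>. f id w')"
    by (rule member_le_sum[OF idW _ finite_W]) (use nn idW in auto)
  also have "\<dots> \<le> (\<Sum>w\<in>weyl_group \<Phi>. \<Sum>w'\<in>weyl_group \<Phi>. f w w')"
    by (rule member_le_sum[OF idW _ finite_W]) (use nn in \<open>auto intro!: sum_nonneg\<close>)
  finally show ?thesis using fid unfolding tensor_mult_def f_def by simp
qed

end


lemma qle: fixes q a b :: real assumes "0 < q" "q < 1" shows "q powr a \<le> q powr b \<longleftrightarrow> b \<le> a"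
proof -
  have "ln q < 0" using assms by simp
  then show ?thesis using assms by (simp add: powr_def mult_le_cancel_right)
qed

lemma qlt: fixes q a b :: real assumes "0 < q" "q < 1" shows "q powr a < q powr b \<longleftrightarrow> b < a"
  using qle[OF assms] by (meson not_le)

lemma qint_pos: assumes "0 < q" "q < 1" "0 < x" shows "0 < qint q x"
proof -
  have "q powr x < q powr (-x)" using qlt[OF assms(1,2)] assms(3) by simp
  then have n: "0 < q powr (-x) - q powr x" by simp
  have "q powr 1 < q powr (-1)" by (subst qlt[OF assms(1,2)]) simp
  then have d: "0 < q powr (-1) - q" using assms(1) by simp
  show ?thesis unfolding qint_def by (rule divide_pos_pos[OF n d])
qed

definition "qD q = q powr (-1) - q"
definition "lowc q a = q powr (-a) * (1 - q powr (2*a)) / (qD q * qint q a)"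
definition "upc q a = q powr (-a) / (qD q * qint q a)"

lemma factor_bounds: fixes q a x :: real assumes q: "0 < q" "q < 1" and a: "0 < a" and x: "0 \<le> x"
  shows "lowc q a * q powr (-x) \<le> qint q (x + a) / qint q a"
    "qint q (x + a) / qint q a \<le> upc q a * q powr (-x)"
    "0 < lowc q a"
proof -
  have "q powr 1 < q powr (-1)" by (subst qlt[OF q]) simp
  then have D: "0 < qD q" using q by (simp add: qD_def)
  have qa: "0 < qint q a" by (rule qint_pos[OF q a])
  have DQ: "0 < qD q * qint q a" using D qa by simp
  have eq: "qint q (x + a) = (q powr (-x-a) - q powr (x+a)) / qD q" by (simp add: qint_def qD_def)
  have pa': "q powr (-a-x) = q powr (-x-a)" by (rule arg_cong[where f="\<lambda>u. q powr u"]) simp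
  have pa: "q powr (-a) * q powr (-x) = q powr (-x-a)" unfolding pa'[symmetric] by (simp add: powr_add[symmetric])
  have up: "q powr (-x-a) - q powr (x+a) \<le> q powr (-a) * q powr (-x)"
    unfolding pa by simp
  have "q powr (x+a) \<le> q powr (a - x)" using qle[OF q] x by simp
  then have lo: "q powr (-a) * (1 - q powr (2*a)) * q powr (-x) \<le> q powr (-x-a) - q powr (x+a)"
    by (simp add: algebra_simps powr_add[symmetric] pa')
  have "qint q (x + a) / qint q a = (q powr (-x-a) - q powr (x+a)) / (qD q * qint q a)"
    using eq by simp
  note e = this
  show "lowc q a * q powr (-x) \<le> qint q (x + a) / qint q a"
    unfolding e lowc_def using lo DQ by (simp add: divide_right_mono mult.commute mult.left_commute)
  show "qint q (x + a) / qint q a \<le> upc q a * q powr (-x)"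
    unfolding e upc_def using up DQ by (simp add: divide_right_mono mult.commute mult.left_commute)
  have "q powr (2*a) < q powr 0" by (subst qlt[OF q]) (use a in simp)
  then have "0 < 1 - q powr (2*a)" using q by simp
  then show "0 < lowc q a" unfolding lowc_def using DQ q by (intro divide_pos_pos[OF _ DQ] mult_pos_pos) auto
qed

context RS begin

definition "Lc q = (\<Prod>\<alpha>\<in>P. lowc q (weyl_vec \<Phi> t \<bullet> \<alpha>))"
definition "Uc q = (\<Prod>\<alpha>\<in>P. upc q (weyl_vec \<Phi> t \<bullet> \<alpha>))"

lemma rho_alpha: "\<alpha> \<in> P \<Longrightarrow> 0 < weyl_vec \<Phi> t \<bullet> \<alpha>"
  using rho_pos[of \<alpha>] by (simp add: rho_eq inner_commute)

lemma qdim_bounds: assumes q: "0 < q" "q < 1" and l: "l \<in> dominant \<Phi> t"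
  shows "Lc q * q powr (-(l \<bullet> S)) \<le> qdim \<Phi> t q l" "qdim \<Phi> t q l \<le> Uc q * q powr (-(l \<bullet> S))"
    "0 < Lc q"
proof -
  have f: "qdim \<Phi> t q l = (\<Prod>\<alpha>\<in>P. qint q (l \<bullet> \<alpha> + weyl_vec \<Phi> t \<bullet> \<alpha>) / qint q (weyl_vec \<Phi> t \<bullet> \<alpha>))"
    by (simp add: qdim_def inner_add_left)
  have pw: "q powr (-(l \<bullet> S)) = (\<Prod>\<alpha>\<in>P. q powr (-(l \<bullet> \<alpha>)))"
    using powr_sum[of q "\<lambda>\<alpha>. -(l \<bullet> \<alpha>)" P] q by (simp add: xS sum_negf)
  have "Lc q * q powr (-(l \<bullet> S)) = (\<Prod>\<alpha>\<in>P. lowc q (weyl_vec \<Phi> t \<bullet> \<alpha>) * q powr (-(l \<bullet> \<alpha>)))"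
    by (simp add: Lc_def pw prod.distrib)
  also have "\<dots> \<le> qdim \<Phi> t q l" unfolding f
  proof (rule prod_mono)
    fix \<alpha> assume a: "\<alpha> \<in> P"
    note fb = factor_bounds[OF q rho_alpha[OF a] dom_nonneg[OF l a]]
    have "0 \<le> lowc q (weyl_vec \<Phi> t \<bullet> \<alpha>) * q powr (-(l \<bullet> \<alpha>))" using fb(3) by simp
    then show "0 \<le> lowc q (weyl_vec \<Phi> t \<bullet> \<alpha>) * q powr (-(l \<bullet> \<alpha>)) \<and>
      lowc q (weyl_vec \<Phi> t \<bullet> \<alpha>) * q powr (-(l \<bullet> \<alpha>)) \<le> qint q (l \<bullet> \<alpha> + weyl_vec \<Phi> t \<bullet> \<alpha>) / qint q (weyl_vec \<Phi> t \<bullet> \<alpha>)"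
      using fb(1) by simp
  qed
  finally show "Lc q * q powr (-(l \<bullet> S)) \<le> qdim \<Phi> t q l" .
  have hb: "0 \<le> qint q (l \<bullet> \<alpha> + weyl_vec \<Phi> t \<bullet> \<alpha>) / qint q (weyl_vec \<Phi> t \<bullet> \<alpha>) \<and>
     qint q (l \<bullet> \<alpha> + weyl_vec \<Phi> t \<bullet> \<alpha>) / qint q (weyl_vec \<Phi> t \<bullet> \<alpha>) \<le> upc q (weyl_vec \<Phi> t \<bullet> \<alpha>) * q powr (-(l \<bullet> \<alpha>))"
    if a: "\<alpha> \<in> P" for \<alpha>
  proof
    note fb = factor_bounds[OF q rho_alpha[OF a] dom_nonneg[OF l a]]
    have "0 \<le> lowc q (weyl_vec \<Phi> t \<bullet> \<alpha>) * q powr (-(l \<bullet> \<alpha>))" using fb(3) by simp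
    then show "0 \<le> qint q (l \<bullet> \<alpha> + weyl_vec \<Phi> t \<bullet> \<alpha>) / qint q (weyl_vec \<Phi> t \<bullet> \<alpha>)"
      using fb(1) by linarith
    show "qint q (l \<bullet> \<alpha> + weyl_vec \<Phi> t \<bullet> \<alpha>) / qint q (weyl_vec \<Phi> t \<bullet> \<alpha>) \<le> upc q (weyl_vec \<Phi> t \<bullet> \<alpha>) * q powr (-(l \<bullet> \<alpha>))"
      using fb(2) .
  qed
  have "qdim \<Phi> t q l \<le> (\<Prod>\<alpha>\<in>P. upc q (weyl_vec \<Phi> t \<bullet> \<alpha>) * q powr (-(l \<bullet> \<alpha>)))" unfolding f
    by (rule prod_mono) (use hb in blast)
  also have "\<dots> = Uc q * q powr (-(l \<bullet> S))"
    by (simp add: Uc_def pw prod.distrib)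
  finally show "qdim \<Phi> t q l \<le> Uc q * q powr (-(l \<bullet> S))" .
  show "0 < Lc q" unfolding Lc_def
    by (rule prod_pos) (use factor_bounds(3)[OF q rho_alpha order_refl] in auto)
qed

end


lemma root_lim: "(\<lambda>n. real n powr (1 / real n)) \<longlonglongrightarrow> 1"
proof -
  have "\<forall>\<^sub>F n in sequentially. root n (real n) = real n powr (1 / real n)"
    unfolding eventually_sequentially by (intro exI[of _ 1]) (auto simp: root_powr_inverse)
  then show ?thesis by (rule tendsto_cong[THEN iffD1, OF _ LIMSEQ_root])
qed

lemma const_lim: fixes c :: real assumes "0 < c" shows "(\<lambda>n. c powr (1 / real n)) \<longlonglongrightarrow> 1"
proof -
  have "(\<lambda>n. c powr (1 / real n)) \<longlonglongrightarrow> c powr 0"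
    by (rule tendsto_powr[OF tendsto_const lim_1_over_n]) (use assms in simp)
  then show ?thesis using assms by simp
qed

lemma powr_pow_n: fixes M :: real assumes "0 < M" "0 < n" shows "(M ^ n) powr (1 / real n) = M"
proof -
  have "(M ^ n) powr (1 / real n) = (M powr real n) powr (1 / real n)" using assms by (simp add: powr_realpow)
  also have "\<dots> = M" using assms by (simp add: powr_powr)
  finally show ?thesis .
qed

lemma powr_pow_p: fixes x :: real assumes "0 < x" shows "(x ^ p) powr e = (x powr e) ^ p"
proof -
  have "(x ^ p) powr e = (x powr real p) powr e" using assms by (simp add: powr_realpow)
  also have "\<dots> = (x powr e) powr real p" by (simp add: powr_powr mult.commute)
  also have "\<dots> = (x powr e) ^ p" using assms by (simp add: powr_realpow)
  finally show ?thesis .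
qed

lemma squeeze: fixes f :: "nat \<Rightarrow> real" and M A B :: real
  assumes M: "0 < M" and A: "0 < A" and B: "0 < B"
    and bnd: "\<And>n. 1 \<le> n \<Longrightarrow> A * M ^ n \<le> f n \<and> f n \<le> B * real n ^ p * M ^ n"
  shows "(\<lambda>n. f n powr (1 / real n)) \<longlonglongrightarrow> M"
proof (rule tendsto_sandwich)
  show "\<forall>\<^sub>F n in sequentially. A powr (1 / real n) * M \<le> f n powr (1 / real n)"
    unfolding eventually_sequentially
  proof (intro exI[of _ 1] allI impI)
    fix n :: nat assume n: "1 \<le> n"
    have "A powr (1 / real n) * M = (A * M ^ n) powr (1 / real n)"
      using n M A by (simp add: powr_mult powr_pow_n)
    also have "\<dots> \<le> f n powr (1 / real n)"
      using bnd[OF n] A M by (intro powr_mono2) auto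
    finally show "A powr (1 / real n) * M \<le> f n powr (1 / real n)" .
  qed
  show "\<forall>\<^sub>F n in sequentially. f n powr (1 / real n) \<le> B powr (1 / real n) * (real n powr (1 / real n)) ^ p * M"
    unfolding eventually_sequentially
  proof (intro exI[of _ 1] allI impI)
    fix n :: nat assume n: "1 \<le> n"
    have "0 \<le> f n" using bnd[OF n] A M by (meson less_le_trans mult_pos_pos zero_less_power less_imp_le)
    then have "f n powr (1 / real n) \<le> (B * real n ^ p * M ^ n) powr (1 / real n)"
      using bnd[OF n] by (intro powr_mono2) auto
    also have "\<dots> = B powr (1 / real n) * (real n powr (1 / real n)) ^ p * M"
    proof -
      have "(B * real n ^ p * M ^ n) powr (1 / real n) = B powr (1 / real n) * (real n ^ p) powr (1 / real n) * (M ^ n) powr (1 / real n)"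
        using M B by (simp add: powr_mult)
      also have "\<dots> = B powr (1 / real n) * (real n powr (1 / real n)) ^ p * M"
      proof -
        have e1: "(M ^ n) powr (1 / real n) = M" using powr_pow_n[OF M] n by simp
        have e2: "(real n ^ p) powr (1 / real n) = (real n powr (1 / real n)) ^ p"
          using powr_pow_p[of "real n" p "1 / real n"] n by simp
        show ?thesis unfolding e1 e2 ..
      qed
      finally show ?thesis .
    qed
    finally show "f n powr (1 / real n) \<le> B powr (1 / real n) * (real n powr (1 / real n)) ^ p * M" .
  qed
  show "(\<lambda>n. A powr (1 / real n) * M) \<longlonglongrightarrow> M"
    using tendsto_mult[OF const_lim[OF A] tendsto_const[of M]] by simp
  show "(\<lambda>n. B powr (1 / real n) * (real n powr (1 / real n)) ^ p * M) \<longlonglongrightarrow> M"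
    using tendsto_mult[OF tendsto_mult[OF const_lim[OF B] tendsto_power[OF root_lim, of p]] tendsto_const[of M]] by simp
qed

context RS begin

definition "mu = Min (insert 1 ((\<lambda>\<alpha>. \<alpha> \<bullet> \<alpha>) ` P))"

lemma mu_pos: "0 < mu"
proof -
  have "\<forall>x \<in> insert 1 ((\<lambda>\<alpha>. \<alpha> \<bullet> \<alpha>) ` P). 0 < x" using P_sub zn by auto
  then show ?thesis unfolding mu_def using finP by (simp add: Min_gr_iff)
qed

lemma mu_le: "\<alpha> \<in> P \<Longrightarrow> mu \<le> \<alpha> \<bullet> \<alpha>"
  unfolding mu_def using finP by (intro Min_le) auto

lemma dom_inj: assumes l: "l \<in> dominant \<Phi> t" and l': "l' \<in> dominant \<Phi> t"
  and e: "\<forall>\<alpha>\<in>P. l \<bullet> \<alpha> = l' \<bullet> \<alpha>" shows "l = l'"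
proof -
  have o: "\<forall>y\<in>\<Phi>. orthogonal (l - l') y"
  proof
    fix y assume y: "y \<in> \<Phi>"
    show "orthogonal (l - l') y"
    proof (cases "y \<in> P")
      case True then show ?thesis using e by (simp add: orthogonal_def inner_diff_left)
    next
      case False
      then have "- y \<in> P" using negP y by blast
      then show ?thesis using e by (simp add: orthogonal_def inner_diff_left) (metis inner_minus_right neg_equal_iff_equal)
    qed
  qed
  have "l - l' \<in> span \<Phi>" using spn by simp
  then have "orthogonal (l - l') (l - l')" using orthogonal_to_span o by blast
  then show ?thesis by (simp add: orthogonal_def)
qed

lemma dom_count: assumes C: "0 \<le> C"
  shows "finite {l \<in> dominant \<Phi> t. l \<bullet> S \<le> C}"
    "real (card {l \<in> dominant \<Phi> t. l \<bullet> S \<le> C}) \<le> (2 * C / mu + 1) ^ card P"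
proof -
  let ?D = "{l \<in> dominant \<Phi> t. l \<bullet> S \<le> C}"
  define N where "N = nat \<lfloor>2 * C / mu\<rfloor>"
  define f where "f = (\<lambda>l. \<lambda>\<alpha>\<in>P. nat \<lfloor>2 * (l \<bullet> \<alpha>) / (\<alpha> \<bullet> \<alpha>)\<rfloor>)"
  have kint: "2 * (l \<bullet> \<alpha>) / (\<alpha> \<bullet> \<alpha>) \<in> \<int>" if "l \<in> dominant \<Phi> t" "\<alpha> \<in> P" for l \<alpha>
    using that P_sub by (auto simp: dominant_def weights_def)
  have aa: "0 < \<alpha> \<bullet> \<alpha>" if "\<alpha> \<in> P" for \<alpha> using that P_sub zn by auto
  have img: "f ` ?D \<subseteq> P \<rightarrow>\<^sub>E {0..N}"
  proof (rule image_subsetI)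
    fix l assume "l \<in> ?D"
    then have l: "l \<in> dominant \<Phi> t" and lC: "l \<bullet> S \<le> C" by auto
    have "nat \<lfloor>2 * (l \<bullet> \<alpha>) / (\<alpha> \<bullet> \<alpha>)\<rfloor> \<le> N" if a: "\<alpha> \<in> P" for \<alpha>
    proof -
      have "l \<bullet> \<alpha> \<le> (\<Sum>\<beta>\<in>P. l \<bullet> \<beta>)" by (rule member_le_sum[OF a _ finP]) (use dom_nonneg[OF l] in auto)
      then have la: "l \<bullet> \<alpha> \<le> C" using lC xS by simp
      have "2 * (l \<bullet> \<alpha>) / (\<alpha> \<bullet> \<alpha>) \<le> 2 * C / (\<alpha> \<bullet> \<alpha>)" using la aa[OF a] by (simp add: divide_right_mono)
      also have "\<dots> \<le> 2 * C / mu" using C mu_pos mu_le[OF a] aa[OF a] by (intro divide_left_mono) (auto intro: mult_pos_pos)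
      finally show ?thesis unfolding N_def by (intro nat_mono floor_mono)
    qed
    then show "f l \<in> P \<rightarrow>\<^sub>E {0..N}" unfolding f_def by auto
  qed
  have inj: "inj_on f ?D"
  proof (rule inj_onI)
    fix l l' assume l: "l \<in> ?D" and l': "l' \<in> ?D" and e: "f l = f l'"
    have "l \<bullet> \<alpha> = l' \<bullet> \<alpha>" if a: "\<alpha> \<in> P" for \<alpha>
    proof -
      have "nat \<lfloor>2 * (l \<bullet> \<alpha>) / (\<alpha> \<bullet> \<alpha>)\<rfloor> = nat \<lfloor>2 * (l' \<bullet> \<alpha>) / (\<alpha> \<bullet> \<alpha>)\<rfloor>"
        using fun_cong[OF e, of \<alpha>] a unfolding f_def by simp
      moreover have "0 \<le> 2 * (l \<bullet> \<alpha>) / (\<alpha> \<bullet> \<alpha>)" "0 \<le> 2 * (l' \<bullet> \<alpha>) / (\<alpha> \<bullet> \<alpha>)"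
        using dom_nonneg a l l' aa[OF a] by auto
      ultimately have "\<lfloor>2 * (l \<bullet> \<alpha>) / (\<alpha> \<bullet> \<alpha>)\<rfloor> = \<lfloor>2 * (l' \<bullet> \<alpha>) / (\<alpha> \<bullet> \<alpha>)\<rfloor>"
        by (metis nat_0_le zero_le_floor)
      moreover have "2 * (l \<bullet> \<alpha>) / (\<alpha> \<bullet> \<alpha>) \<in> \<int>" "2 * (l' \<bullet> \<alpha>) / (\<alpha> \<bullet> \<alpha>) \<in> \<int>"
        using kint a l l' by auto
      ultimately have "2 * (l \<bullet> \<alpha>) / (\<alpha> \<bullet> \<alpha>) = 2 * (l' \<bullet> \<alpha>) / (\<alpha> \<bullet> \<alpha>)"
        by (metis Ints_cases floor_of_int)
      then show ?thesis using aa[OF a] by (simp add: field_simps)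
    qed
    then show "l = l'" using dom_inj l l' by blast
  qed
  have fin: "finite (P \<rightarrow>\<^sub>E {0..N})" using finP by (simp add: finite_PiE)
  show "finite ?D" by (rule inj_on_finite[OF inj img fin])
  have "card ?D \<le> card (P \<rightarrow>\<^sub>E {0..N})" by (rule card_inj_on_le[OF inj img fin])
  also have "\<dots> = (N + 1) ^ card P" using finP by (simp add: card_PiE)
  finally have "real (card ?D) \<le> (real N + 1) ^ card P" by (metis of_nat_Suc of_nat_le_iff of_nat_power Suc_eq_plus1 add.commute)
  also have "\<dots> \<le> (2 * C / mu + 1) ^ card P"
  proof (rule power_mono)
    have "real N \<le> 2 * C / mu" unfolding N_def using C mu_pos by simp
    then show "real N + 1 \<le> 2 * C / mu + 1" by simp
  qed simp
  finally show "real (card ?D) \<le> (2 * C / mu + 1) ^ card P" .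
qed

lemma prod_dom: "products \<Phi> t Y n \<subseteq> dominant \<Phi> t"
  by (cases n) (auto simp: zero_dom)

lemma prod_bound: assumes Y: "Y \<subseteq> dominant \<Phi> t" and yb: "\<forall>y\<in>Y. y \<bullet> S \<le> m0" and m0: "0 \<le> m0"
  shows "l \<in> products \<Phi> t Y n \<Longrightarrow> l \<bullet> S \<le> real n * m0"
proof (induction n arbitrary: l)
  case 0 then show ?case by simp
next
  case (Suc n)
  then obtain m y where m: "m \<in> products \<Phi> t Y n" and y: "y \<in> Y" and tm: "tensor_mult \<Phi> t m y l > 0"
    and l: "l \<in> dominant \<Phi> t" by auto
  have "l \<bullet> S \<le> m \<bullet> S + y \<bullet> S" using tm_bound[OF _ _ tm] prod_dom m Y y by blast
  also have "\<dots> \<le> real n * m0 + m0" using Suc.IH[OF m] yb y by fastforce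
  finally show ?case by (simp add: algebra_simps)
qed

lemma prod_mult: assumes y: "y \<in> Y" "y \<in> dominant \<Phi> t" shows "real n *\<^sub>R y \<in> products \<Phi> t Y n"
proof (induction n)
  case 0 then show ?case by simp
next
  case (Suc n)
  have d: "real n *\<^sub>R y \<in> dominant \<Phi> t" using Suc prod_dom by blast
  have e: "real (Suc n) *\<^sub>R y = real n *\<^sub>R y + y" by (simp add: algebra_simps)
  have "tensor_mult \<Phi> t (real n *\<^sub>R y) y (real n *\<^sub>R y + y) \<ge> 1" by (rule tm_pos[OF d y(2)])
  then have "tensor_mult \<Phi> t (real n *\<^sub>R y) y (real n *\<^sub>R y + y) > 0" by linarith
  then show ?case unfolding e products.simps mem_Collect_eq using Suc.IH y(1) dom_add[OF d y(2)] by blast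
qed

end


context RS begin

lemma ball_sub: assumes Y: "Y \<subseteq> dominant \<Phi> t" and yb: "\<forall>y\<in>Y. y \<bullet> S \<le> m0" and m0: "0 \<le> m0"
  shows "ball_set \<Phi> t Y n \<subseteq> {l \<in> dominant \<Phi> t. l \<bullet> S \<le> real n * m0}"
proof
  fix l assume "l \<in> ball_set \<Phi> t Y n"
  then have l: "l \<in> dominant \<Phi> t" and ex: "\<exists>k. l \<in> products \<Phi> t Y k" and wl: "word_length \<Phi> t Y l \<le> n"
    by (auto simp: ball_set_def)
  have "l \<in> products \<Phi> t Y (word_length \<Phi> t Y l)"
    unfolding word_length_def using ex by (rule LeastI_ex)
  then have "l \<bullet> S \<le> real (word_length \<Phi> t Y l) * m0" by (rule prod_bound[OF Y yb m0])
  also have "\<dots> \<le> real n * m0" using wl m0 by (intro mult_right_mono) auto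
  finally show "l \<in> {l \<in> dominant \<Phi> t. l \<bullet> S \<le> real n * m0}" using l by simp
qed

lemma ball_mem: assumes "y \<in> Y" "y \<in> dominant \<Phi> t" shows "real n *\<^sub>R y \<in> ball_set \<Phi> t Y n"
proof -
  have p: "real n *\<^sub>R y \<in> products \<Phi> t Y n" by (rule prod_mult[OF assms])
  then have "word_length \<Phi> t Y (real n *\<^sub>R y) \<le> n" unfolding word_length_def by (rule Least_le)
  then show ?thesis using p prod_dom unfolding ball_set_def by blast
qed

lemma S_dom: "S \<in> dominant \<Phi> t"
proof -
  have "2 * (S \<bullet> \<alpha>) / (\<alpha> \<bullet> \<alpha>) \<in> \<int>" if a: "\<alpha> \<in> \<Phi>" for \<alpha>
  proof -
    have "2 * (S \<bullet> \<alpha>) / (\<alpha> \<bullet> \<alpha>) = (\<Sum>\<beta>\<in>P. 2 * (\<beta> \<bullet> \<alpha>) / (\<alpha> \<bullet> \<alpha>))"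
      by (simp add: S_def inner_sum_left sum_distrib_left sum_divide_distrib)
    also have "\<dots> \<in> \<int>" using rs a P_sub unfolding root_system_def by (intro Ints_sum) blast
    finally show ?thesis .
  qed
  moreover have "\<forall>\<alpha>\<in>P. 0 \<le> S \<bullet> \<alpha>" using rho_pos by (simp add: inner_commute less_imp_le)
  ultimately show ?thesis by (simp add: dominant_def weights_def)
qed

lemma S_nz: "S \<noteq> 0"
proof -
  have "\<Phi> \<noteq> {}"
  proof
    assume "\<Phi> = {}"
    then have "span \<Phi> = {0}" by simp
    then show False using spn by (metis UNIV_I singletonD nonzero_Basis SOME_Basis)
  qed
  then obtain \<beta> where b: "\<beta> \<in> \<Phi>" by blast
  obtain \<gamma> where g: "\<gamma> \<in> P" using negP[OF b] by blast
  show ?thesis using rho_pos[OF g] by auto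
qed

end

theorem proposition6p5:
  fixes \<Phi> :: "'a::euclidean_space set" and t :: 'a and q :: real and Y :: "'a set"
  assumes "root_system \<Phi>" and "short_normalised \<Phi>" and "regular \<Phi> t"
    and "0 < q" and "q < 1"
    and "generating_set \<Phi> t Y"
  shows "(\<lambda>n. ball_size \<Phi> t q Y n powr (1 / real n)) \<longlonglongrightarrow>
           Max ((\<lambda>l. q powr (-4 * (l \<bullet> weyl_vec \<Phi> t))) ` Y)"
proof -
  interpret RS \<Phi> t using assms(1,3) by unfold_locales
  have q: "0 < q" "q < 1" using assms(4,5) .
  have finY: "finite Y" and Ydom: "Y \<subseteq> dominant \<Phi> t" and gen: "\<forall>l\<in>dominant \<Phi> t. \<exists>n. l \<in> products \<Phi> t Y n"
    using assms(6) unfolding generating_set_def by auto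
  have Yne: "Y \<noteq> {}"
  proof
    assume Y0: "Y = {}"
    obtain n where "S \<in> products \<Phi> t Y n" using gen S_dom by blast
    then show False using Y0 S_nz by (cases n) auto
  qed
  define F where "F = (\<lambda>l. q powr (-4 * (l \<bullet> weyl_vec \<Phi> t)))"
  have FS: "F l = q powr (-2 * (l \<bullet> S))" for l unfolding F_def rho_eq by simp
  have "Max (F ` Y) \<in> F ` Y" using finY Yne by (intro Max_in) auto
  then obtain y0 where y0: "y0 \<in> Y" and My: "Max (F ` Y) = F y0" by blast
  define m0 where "m0 = y0 \<bullet> S"
  define M where "M = q powr (-2 * m0)"
  have M: "0 < M" using q by (simp add: M_def)
  have m0: "0 \<le> m0" unfolding m0_def using dom_S Ydom y0 by blast
  have yb: "\<forall>y\<in>Y. y \<bullet> S \<le> m0"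
  proof
    fix y assume y: "y \<in> Y"
    have "F y \<le> F y0" using My finY y by (metis Max_ge finite_imageI imageI)
    then show "y \<bullet> S \<le> m0" unfolding FS m0_def using qle[OF q] by simp
  qed
  have MM: "M ^ n = q powr (- (2 * (real n * m0)))" for n
  proof -
    have "M ^ n = M powr real n" using M by (simp add: powr_realpow)
    also have "\<dots> = q powr (- (2 * (real n * m0)))" unfolding M_def by (simp add: powr_powr algebra_simps)
    finally show ?thesis .
  qed
  have sq: "(q powr x) ^ 2 = q powr (2 * x)" for x
    using q by (simp add: power2_eq_square powr_add[symmetric])
  define f where "f = (\<lambda>n. ball_size \<Phi> t q Y n)"
  define K where "K = (Uc q)\<^sup>2 * (2 * m0 / mu + 1) ^ card P"
  have qnn: "0 \<le> qdim \<Phi> t q l" if "l \<in> dominant \<Phi> t" for l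
    using qdim_bounds(1,3)[OF q that] q by (smt (verit) mult_pos_pos powr_gt_zero)
  have bnd: "(Lc q)\<^sup>2 * M ^ n \<le> f n \<and> f n \<le> K * real n ^ card P * M ^ n" if n: "1 \<le> n" for n
  proof
    have sub: "ball_set \<Phi> t Y n \<subseteq> {l \<in> dominant \<Phi> t. l \<bullet> S \<le> real n * m0}" by (rule ball_sub[OF Ydom yb m0])
    have C: "0 \<le> real n * m0" using m0 by simp
    have finB: "finite (ball_set \<Phi> t Y n)" using dom_count(1)[OF C] sub finite_subset by blast
    have y0d: "y0 \<in> dominant \<Phi> t" using y0 Ydom by blast
    have mem: "real n *\<^sub>R y0 \<in> ball_set \<Phi> t Y n" by (rule ball_mem[OF y0 y0d])
    have nd: "real n *\<^sub>R y0 \<in> dominant \<Phi> t" using mem sub by blast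
    have "(Lc q)\<^sup>2 * M ^ n = (Lc q * q powr (- ((real n *\<^sub>R y0) \<bullet> S)))\<^sup>2"
      unfolding MM power_mult_distrib sq m0_def by simp
    also have "\<dots> \<le> (qdim \<Phi> t q (real n *\<^sub>R y0))\<^sup>2"
      using qdim_bounds[OF q nd] q by (intro power_mono) (auto intro!: mult_nonneg_nonneg less_imp_le)
    also have "\<dots> \<le> f n" unfolding f_def ball_size_def
      by (rule member_le_sum[OF mem _ finB]) auto
    finally show "(Lc q)\<^sup>2 * M ^ n \<le> f n" .
    have each: "(qdim \<Phi> t q l)\<^sup>2 \<le> (Uc q)\<^sup>2 * M ^ n" if l: "l \<in> ball_set \<Phi> t Y n" for l
    proof -
      have ld: "l \<in> dominant \<Phi> t" and lS: "l \<bullet> S \<le> real n * m0" using l sub by auto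
      have "(qdim \<Phi> t q l)\<^sup>2 \<le> (Uc q * q powr (-(l \<bullet> S)))\<^sup>2"
        using qdim_bounds(2)[OF q ld] qnn[OF ld] by (intro power_mono) auto
      also have "\<dots> \<le> (Uc q * q powr (- (real n * m0)))\<^sup>2"
      proof (intro power_mono mult_left_mono)
        show "q powr (-(l \<bullet> S)) \<le> q powr (- (real n * m0))" using qle[OF q] lS by simp
        show "0 \<le> Uc q" using qdim_bounds(2)[OF q ld] qnn[OF ld] q
          by (smt (verit) powr_gt_zero zero_le_mult_iff)
        show "0 \<le> Uc q * q powr (-(l \<bullet> S))" using qdim_bounds(2)[OF q ld] qnn[OF ld] by linarith
      qed
      also have "\<dots> = (Uc q)\<^sup>2 * M ^ n" unfolding MM power_mult_distrib sq by simp
      finally show ?thesis .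
    qed
    have "f n \<le> real (card (ball_set \<Phi> t Y n)) * ((Uc q)\<^sup>2 * M ^ n)"
      unfolding f_def ball_size_def by (rule sum_bounded_above) (use each in auto)
    also have "\<dots> \<le> real (card {l \<in> dominant \<Phi> t. l \<bullet> S \<le> real n * m0}) * ((Uc q)\<^sup>2 * M ^ n)"
      using card_mono[OF dom_count(1)[OF C] sub] M by (intro mult_right_mono) auto
    also have "\<dots> \<le> (2 * (real n * m0) / mu + 1) ^ card P * ((Uc q)\<^sup>2 * M ^ n)"
      using dom_count(2)[OF C] M by (intro mult_right_mono) auto
    also have "\<dots> \<le> ((2 * m0 / mu + 1) * real n) ^ card P * ((Uc q)\<^sup>2 * M ^ n)"
    proof (intro mult_right_mono power_mono)
      have "2 * (real n * m0) / mu \<le> 2 * m0 / mu * real n" by (simp add: algebra_simps)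
      moreover have "1 \<le> real n" using n by simp
      moreover have "0 \<le> 2 * m0 / mu" using m0 mu_pos by simp
      ultimately show "2 * (real n * m0) / mu + 1 \<le> (2 * m0 / mu + 1) * real n" by (simp add: algebra_simps)
      show "0 \<le> 2 * (real n * m0) / mu + 1" using m0 mu_pos by simp
      show "0 \<le> (Uc q)\<^sup>2 * M ^ n" using M by simp
    qed
    also have "\<dots> = K * real n ^ card P * M ^ n" unfolding K_def power_mult_distrib by (simp only: ac_simps)
    finally show "f n \<le> K * real n ^ card P * M ^ n" .
  qed
  have Kpos: "0 < K"
  proof -
    have "0 < (Lc q)\<^sup>2 * M ^ 1" using qdim_bounds(3)[OF q zero_dom] M by simp
    also have "\<dots> \<le> K * real 1 ^ card P * M ^ 1" using bnd[of 1] by simp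
    finally show ?thesis using M by (simp add: zero_less_mult_iff)
  qed
  have "(\<lambda>n. f n powr (1 / real n)) \<longlonglongrightarrow> M"
    by (rule squeeze[OF M _ Kpos bnd]) (use qdim_bounds(3)[OF q zero_dom] in simp)
  moreover have "M = Max ((\<lambda>l. q powr (-4 * (l \<bullet> weyl_vec \<Phi> t))) ` Y)"
    using My unfolding F_def[symmetric] FS M_def m0_def by simp
  ultimately show ?thesis unfolding f_def by simp
qed


end
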